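(* For all record types $\rho_1,\rho_2\in\mathbb{T}_R$: $\rho_1+\rho_2=\rho_1\cap\rho_2$ if and only if $\rho_1+\rho_2\le\rho_1$.
   Context: $\mathbb{T}\ni\sigma ::= a\mid\omega\mid\sigma_1\to\sigma_2\mid\sigma_1\cap\sigma_2\mid\rho$ and record types $\mathbb{T}_R\ni\rho ::= \langle\rangle\mid\langle l:\sigma\rangle\mid\rho_1+\rho_2\mid\rho_1\cap\rho_2$. Subtyping $\le$ is the least preorder with: $\sigma\le\omega$; $\omega\le\omega\to\omega$; $\sigma\cap\tau\le\sigma$; $\sigma\cap\tau\le\tau$; $\sigma\le\tau_1,\sigma\le\tau_2\Rightarrow\sigma\le\tau_1\cap\tau_2$; $(\sigma\to\tau_1)\cap(\sigma\to\tau_2)\le\sigma\to\tau_1\cap\tau_2$; $\sigma_2\le\sigma_1,\tau_1\le\tau_2\Rightarrow\sigma_1\to\tau_1\le\sigma_2\to\tau_2$; $\langle l:\sigma\rangle\le\langle\rangle$; $\langle l:\sigma\rangle\cap\langle l:\tau\rangle\le\langle l:\sigma\cap\tau\rangle$; $\sigma\le\tau\Rightarrow\langle l:\sigma\rangle\le\langle l:\tau\rangle$; $\rho+\langle\rangle=\langle\rangle+\rho=\rho$; $(\rho_1+\rho_2)+\rho_3=\rho_1+(\rho_2+\rho_3)$; $(\rho_1\cap\rho_2)+\rho_3=(\rho_1+\rho_3)\cap(\rho_2+\rho_3)$; $\langle l:\sigma\rangle+(\langle l:\tau\rangle\cap\rho)=\langle l:\tau\rangle\cap\rho$; $\langle l:\sigma\rangle+(\langle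 l':\tau\rangle\cap\rho)=\langle l':\tau\rangle\cap(\langle l:\sigma\rangle+\rho)$ if $l\neq l'$; $\rho_1\le\rho_2\Rightarrow\rho_1+\rho\le\rho_2+\rho$; $\rho_1=\rho_2\Rightarrow\rho+\rho_1=\rho+\rho_2$. $=$ means $\le$ in both directions. *)

theory Defs
  imports Main
begin

text \<open>Types over atoms 'a and labels 'l. Record types are the subset
  recognised by is_rec; well-formed types (the set T) by wf.\<close>

datatype ('a, 'l) ty =
    Atom 'a
  | Omega
  | Arrow "('a, 'l) ty" "('a, 'l) ty"
  | Inter "('a, 'l) ty" "('a, 'l) ty"
  | EmptyRec
  | Field 'l "('a, 'l) ty"
  | Plus "('a, 'l) ty" "('a, 'l) ty"

fun wf :: "('a, 'l) ty \<Rightarrow> bool" and is_rec :: "('a, 'l) ty \<Rightarrow> bool" where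
  "wf (Atom a) = True"
| "wf Omega = True"
| "wf (Arrow s t) = (wf s \<and> wf t)"
| "wf (Inter s t) = (wf s \<and> wf t)"
| "wf EmptyRec = True"
| "wf (Field l s) = wf s"
| "wf (Plus r1 r2) = (is_rec r1 \<and> is_rec r2)"
| "is_rec EmptyRec = True"
| "is_rec (Field l s) = wf s"
| "is_rec (Plus r1 r2) = (is_rec r1 \<and> is_rec r2)"
| "is_rec (Inter r1 r2) = (is_rec r1 \<and> is_rec r2)"
| "is_rec (Atom a) = False"
| "is_rec Omega = False"
| "is_rec (Arrow s t) = False"

inductive sub :: "('a, 'l) ty \<Rightarrow> ('a, 'l) ty \<Rightarrow> bool" where
  refl: "wf s \<Longrightarrow> sub s s"
| trans: "sub s t \<Longrightarrow> sub t u \<Longrightarrow> sub s u"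
| top: "wf s \<Longrightarrow> sub s Omega"
| omega_arr: "sub Omega (Arrow Omega Omega)"
| inter_l: "wf s \<Longrightarrow> wf t \<Longrightarrow> sub (Inter s t) s"
| inter_r: "wf s \<Longrightarrow> wf t \<Longrightarrow> sub (Inter s t) t"
| inter_glb: "sub s t1 \<Longrightarrow> sub s t2 \<Longrightarrow> sub s (Inter t1 t2)"
| arr_inter: "wf s \<Longrightarrow> wf t1 \<Longrightarrow> wf t2 \<Longrightarrow>
     sub (Inter (Arrow s t1) (Arrow s t2)) (Arrow s (Inter t1 t2))"
| arr: "sub s2 s1 \<Longrightarrow> sub t1 t2 \<Longrightarrow> sub (Arrow s1 t1) (Arrow s2 t2)"
| field_empty: "wf s \<Longrightarrow> sub (Field l s) EmptyRec"
| field_inter: "wf s \<Longrightarrow> wf t \<Longrightarrow> sub (Inter (Field l s) (Field l t)) (Field l (Inter s t))"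
| field_mono: "sub s t \<Longrightarrow> sub (Field l s) (Field l t)"
| plus_empty_r1: "is_rec r \<Longrightarrow> sub (Plus r EmptyRec) r"
| plus_empty_r2: "is_rec r \<Longrightarrow> sub r (Plus r EmptyRec)"
| plus_empty_l1: "is_rec r \<Longrightarrow> sub (Plus EmptyRec r) r"
| plus_empty_l2: "is_rec r \<Longrightarrow> sub r (Plus EmptyRec r)"
| plus_assoc1: "is_rec r1 \<Longrightarrow> is_rec r2 \<Longrightarrow> is_rec r3 \<Longrightarrow>
     sub (Plus (Plus r1 r2) r3) (Plus r1 (Plus r2 r3))"
| plus_assoc2: "is_rec r1 \<Longrightarrow> is_rec r2 \<Longrightarrow> is_rec r3 \<Longrightarrow>
     sub (Plus r1 (Plus r2 r3)) (Plus (Plus r1 r2) r3)"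
| plus_distr1: "is_rec r1 \<Longrightarrow> is_rec r2 \<Longrightarrow> is_rec r3 \<Longrightarrow>
     sub (Plus (Inter r1 r2) r3) (Inter (Plus r1 r3) (Plus r2 r3))"
| plus_distr2: "is_rec r1 \<Longrightarrow> is_rec r2 \<Longrightarrow> is_rec r3 \<Longrightarrow>
     sub (Inter (Plus r1 r3) (Plus r2 r3)) (Plus (Inter r1 r2) r3)"
| plus_same1: "wf s \<Longrightarrow> wf t \<Longrightarrow> is_rec r \<Longrightarrow>
     sub (Plus (Field l s) (Inter (Field l t) r)) (Inter (Field l t) r)"
| plus_same2: "wf s \<Longrightarrow> wf t \<Longrightarrow> is_rec r \<Longrightarrow>
     sub (Inter (Field l t) r) (Plus (Field l s) (Inter (Field l t) r))"
| plus_diff1: "l \<noteq> l' \<Longrightarrow> wf s \<Longrightarrow> wf t \<Longrightarrow> is_rec r \<Longrightarrow>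
     sub (Plus (Field l s) (Inter (Field l' t) r)) (Inter (Field l' t) (Plus (Field l s) r))"
| plus_diff2: "l \<noteq> l' \<Longrightarrow> wf s \<Longrightarrow> wf t \<Longrightarrow> is_rec r \<Longrightarrow>
     sub (Inter (Field l' t) (Plus (Field l s) r)) (Plus (Field l s) (Inter (Field l' t) r))"
| plus_mono_l: "sub r1 r2 \<Longrightarrow> is_rec r1 \<Longrightarrow> is_rec r2 \<Longrightarrow> is_rec r \<Longrightarrow>
     sub (Plus r1 r) (Plus r2 r)"
| plus_cong_r: "sub r1 r2 \<Longrightarrow> sub r2 r1 \<Longrightarrow> is_rec r1 \<Longrightarrow> is_rec r2 \<Longrightarrow> is_rec r \<Longrightarrow>
     sub (Plus r r1) (Plus r r2)"

end

theory Submission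
  imports Defs
begin

lemma rec_wf: "is_rec r \<Longrightarrow> wf r"
  by (induct r) auto

lemma sub_wf: "sub s t \<Longrightarrow> wf s \<and> wf t"
  by (induct rule: sub.induct) (auto simp: rec_wf)

definition eqv where "eqv a b \<longleftrightarrow> sub a b \<and> sub b a"

lemma eqv_trans: "eqv a b \<Longrightarrow> eqv b c \<Longrightarrow> eqv a c"
  unfolding eqv_def by (meson sub.trans)

lemma eqv_sym: "eqv a b \<Longrightarrow> eqv b a"
  unfolding eqv_def by simp

lemma inter_mono: "sub a a' \<Longrightarrow> sub b b' \<Longrightarrow> sub (Inter a b) (Inter a' b')"
proof -
  assume h: "sub a a'" "sub b b'"
  have w: "wf a" "wf b" using h sub_wf by blast+
  show ?thesis
    by (rule sub.inter_glb) (meson h sub.trans sub.inter_l sub.inter_r w)+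
qed

lemma inter_eqv: "eqv a a' \<Longrightarrow> eqv b b' \<Longrightarrow> eqv (Inter a b) (Inter a' b')"
  unfolding eqv_def using inter_mono by blast

fun lst :: "('l \<times> ('a, 'l) ty) list \<Rightarrow> ('a, 'l) ty" where
  "lst [] = EmptyRec"
| "lst (p # xs) = Inter (Field (fst p) (snd p)) (lst xs)"

definition wfl :: "('l \<times> ('a, 'l) ty) list \<Rightarrow> bool" where
  "wfl xs \<longleftrightarrow> (\<forall>p\<in>set xs. wf (snd p))"

lemma rec_lst: "wfl xs \<Longrightarrow> is_rec (lst xs)"
  by (induct xs) (auto simp: wfl_def)

lemma lst_empty: "wfl xs \<Longrightarrow> sub (lst xs) EmptyRec"
proof (induct xs)
  case Nil then show ?case by (auto intro: sub.refl)
next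
  case (Cons p xs)
  have ww: "wf (Field (fst p) (snd p))" "wf (lst xs)" using Cons rec_lst[of xs] rec_wf by (auto simp: wfl_def)
  have "sub (lst (p#xs)) (Field (fst p) (snd p))"
    using sub.inter_l[OF ww] by simp
  moreover have "sub (Field (fst p) (snd p)) EmptyRec" using Cons by (auto simp: wfl_def intro: sub.field_empty)
  ultimately show ?case by (rule sub.trans)
qed

lemma lst_field0: "wfl xs \<Longrightarrow> p \<in> set xs \<Longrightarrow> sub (lst xs) (Field (fst p) (snd p))"
proof (induct xs)
  case Nil then show ?case by simp
next
  case (Cons q xs)
  have w: "wf (snd q)" "wfl xs" "wf (lst xs)" using Cons rec_lst rec_wf by (auto simp: wfl_def)
  show ?case
  proof (cases "p = q")
    case True then show ?thesis using w sub.inter_l[of "Field (fst q) (snd q)" "lst xs"] by simp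
  next
    case False
    then have "p \<in> set xs" using Cons by simp
    then have "sub (lst xs) (Field (fst p) (snd p))" using Cons w by simp
    moreover have "sub (lst (q#xs)) (lst xs)" using w by (auto intro: sub.inter_r)
    ultimately show ?thesis by (meson sub.trans)
  qed
qed

lemma lst_field: "wfl xs \<Longrightarrow> (l, t) \<in> set xs \<Longrightarrow> sub (lst xs) (Field l t)"
  using lst_field0[of xs "(l,t)"] by simp

lemma lst_intro: "sub X EmptyRec \<Longrightarrow> (\<forall>p\<in>set ys. sub X (Field (fst p) (snd p))) \<Longrightarrow> sub X (lst ys)"
  by (induct ys) (auto intro: sub.inter_glb)

lemma lst_sub: "wfl xs \<Longrightarrow> set ys \<subseteq> set xs \<Longrightarrow> sub (lst xs) (lst ys)"
  by (rule lst_intro) (auto simp: lst_empty subset_iff intro: lst_field)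

lemma wfl_app: "wfl (xs @ ys) \<longleftrightarrow> wfl xs \<and> wfl ys"
  by (auto simp: wfl_def)

lemma lst_app: "wfl xs \<Longrightarrow> wfl ys \<Longrightarrow> eqv (Inter (lst xs) (lst ys)) (lst (xs @ ys))"
proof -
  assume a: "wfl xs" "wfl ys"
  have w: "wf (lst xs)" "wf (lst ys)" using a rec_lst rec_wf by blast+
  have 1: "sub (Inter (lst xs) (lst ys)) (lst (xs @ ys))"
  proof (rule lst_intro)
    show "sub (Inter (lst xs) (lst ys)) EmptyRec"
      using a w lst_empty by (meson sub.trans sub.inter_l)
    show "\<forall>p\<in>set (xs @ ys). sub (Inter (lst xs) (lst ys)) (Field (fst p) (snd p))"
    proof
      fix p assume "p \<in> set (xs @ ys)"
      then have "p \<in> set xs \<or> p \<in> set ys" by simp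
      then show "sub (Inter (lst xs) (lst ys)) (Field (fst p) (snd p))"
      proof
        assume "p \<in> set xs"
        then show ?thesis using a w lst_field0 sub.trans sub.inter_l by metis
      next
        assume "p \<in> set ys"
        then show ?thesis using a w lst_field0 sub.trans sub.inter_r by metis
      qed
    qed
  qed
  have 2: "sub (lst (xs @ ys)) (Inter (lst xs) (lst ys))"
    using a by (auto intro!: sub.inter_glb lst_sub simp: wfl_app)
  show ?thesis using 1 2 eqv_def by blast
qed

fun ins :: "'l \<Rightarrow> ('a, 'l) ty \<Rightarrow> ('l \<times> ('a, 'l) ty) list \<Rightarrow> ('l \<times> ('a, 'l) ty) list" where
  "ins l s [] = [(l, s)]"
| "ins l s (q # ys) = (if l = fst q then q # ys else q # ins l s ys)"

lemma ins_set: "set ys \<subseteq> set (ins l s ys) \<and> set (ins l s ys) \<subseteq> insert (l, s) (set ys)"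
  by (induct ys) auto

lemma wfl_ins: "wf s \<Longrightarrow> wfl ys \<Longrightarrow> wfl (ins l s ys)"
  using ins_set[of ys l s] by (auto simp: wfl_def)

lemma field_ins: "wf s \<Longrightarrow> wfl ys \<Longrightarrow> eqv (Plus (Field l s) (lst ys)) (lst (ins l s ys))"
proof (induct ys)
  case Nil
  have "eqv (Plus (Field l s) EmptyRec) (Field l s)"
    using Nil by (auto simp: eqv_def intro: sub.plus_empty_r1 sub.plus_empty_r2)
  moreover have "eqv (Field l s) (lst [(l, s)])"
    using Nil by (auto simp: eqv_def intro!: sub.inter_glb sub.refl sub.field_empty sub.inter_l)
  ultimately show ?case by (auto intro: eqv_trans)
next
  case (Cons q ys)
  obtain l' t where q: "q = (l', t)" by (cases q)
  have w: "wf t" "wfl ys" "is_rec (lst ys)" using Cons q rec_lst by (auto simp: wfl_def)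
  show ?case
  proof (cases "l = l'")
    case True
    then show ?thesis using q w Cons by (auto simp: eqv_def intro: sub.plus_same1 sub.plus_same2)
  next
    case False
    have 1: "eqv (Plus (Field l s) (lst (q # ys))) (Inter (Field l' t) (Plus (Field l s) (lst ys)))"
      using q w Cons False by (auto simp: eqv_def intro: sub.plus_diff1 sub.plus_diff2)
    have "eqv (Plus (Field l s) (lst ys)) (lst (ins l s ys))" using Cons w by simp
    moreover have "eqv (Field l' t) (Field l' t)" using w by (auto simp: eqv_def intro: sub.refl)
    ultimately have 2: "eqv (Inter (Field l' t) (Plus (Field l s) (lst ys))) (lst (ins l s (q # ys)))"
      using q False by (auto intro: inter_eqv)
    show ?thesis using 1 2 eqv_trans by blast
  qed
qed

fun merge :: "('l \<times> ('a, 'l) ty) list \<Rightarrow> ('l \<times> ('a, 'l) ty) list \<Rightarrow> ('l \<times> ('a, 'l) ty) list" where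
  "merge [] ys = ys"
| "merge (p # xs) ys = ins (fst p) (snd p) ys @ merge xs ys"

lemma merge_set: "set ys \<subseteq> set (merge xs ys) \<and> set (merge xs ys) \<subseteq> set xs \<union> set ys"
  using ins_set by (induct xs) fastforce+

lemma wfl_merge: "wfl xs \<Longrightarrow> wfl ys \<Longrightarrow> wfl (merge xs ys)"
  using merge_set[of ys xs] by (auto simp: wfl_def)

lemma plus_lst: "wfl xs \<Longrightarrow> wfl ys \<Longrightarrow> eqv (Plus (lst xs) (lst ys)) (lst (merge xs ys))"
proof (induct xs)
  case Nil
  then show ?case using rec_lst by (auto simp: eqv_def intro: sub.plus_empty_l1 sub.plus_empty_l2)
next
  case (Cons p xs)
  have w: "wf (snd p)" "wfl xs" using Cons by (auto simp: wfl_def)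
  have r: "is_rec (lst xs)" "is_rec (lst ys)" "is_rec (Field (fst p) (snd p))" using w Cons rec_lst by auto
  have 1: "eqv (Plus (lst (p # xs)) (lst ys))
     (Inter (Plus (Field (fst p) (snd p)) (lst ys)) (Plus (lst xs) (lst ys)))"
    using r by (auto simp: eqv_def intro: sub.plus_distr1 sub.plus_distr2)
  have 2: "eqv (Inter (Plus (Field (fst p) (snd p)) (lst ys)) (Plus (lst xs) (lst ys)))
     (Inter (lst (ins (fst p) (snd p) ys)) (lst (merge xs ys)))"
    using inter_eqv[OF field_ins[OF w(1) Cons(3)] Cons(1)[OF w(2) Cons(3)]] .
  have 3: "eqv (Inter (lst (ins (fst p) (snd p) ys)) (lst (merge xs ys))) (lst (merge (p # xs) ys))"
    using lst_app[OF wfl_ins[OF w(1) Cons(3)] wfl_merge[OF w(2) Cons(3)]] by simp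
  show ?case using 1 2 3 eqv_trans by blast
qed

lemma plus_eqv: "eqv a a' \<Longrightarrow> eqv b b' \<Longrightarrow> is_rec a \<Longrightarrow> is_rec a' \<Longrightarrow> is_rec b \<Longrightarrow> is_rec b'
   \<Longrightarrow> eqv (Plus a b) (Plus a' b')"
proof -
  assume h: "eqv a a'" "eqv b b'" "is_rec a" "is_rec a'" "is_rec b" "is_rec b'"
  have "eqv (Plus a b) (Plus a' b)" using h by (auto simp: eqv_def intro: sub.plus_mono_l)
  moreover have "eqv (Plus a' b) (Plus a' b')" using h by (auto simp: eqv_def intro: sub.plus_cong_r)
  ultimately show ?thesis by (rule eqv_trans)
qed

lemma nf: "is_rec r \<Longrightarrow> \<exists>xs. wfl xs \<and> eqv r (lst xs)"
proof (induct r)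
  case (Inter a b)
  then obtain xs ys where "wfl xs" "eqv a (lst xs)" "wfl ys" "eqv b (lst ys)" by auto
  then show ?case using lst_app inter_eqv eqv_trans wfl_app by metis
next
  case EmptyRec then show ?case by (auto simp: eqv_def wfl_def intro!: exI[of _ "[]"] sub.refl)
next
  case (Field l s)
  have "eqv (Field l s) (lst [(l, s)])"
    using Field by (auto simp: eqv_def intro!: sub.inter_glb sub.refl sub.field_empty sub.inter_l)
  then show ?case using Field by (auto simp: wfl_def intro!: exI[of _ "[(l, s)]"])
next
  case (Plus a b)
  then obtain xs ys where h: "wfl xs" "eqv a (lst xs)" "wfl ys" "eqv b (lst ys)" by auto
  have "eqv (Plus a b) (Plus (lst xs) (lst ys))" using h Plus rec_lst by (auto intro: plus_eqv)
  then show ?case using plus_lst h wfl_merge eqv_trans by metis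
qed auto

theorem lemma3p9:
  fixes r1 r2 :: "('a, 'l) ty"
  assumes "is_rec r1" and "is_rec r2"
  shows "(sub (Plus r1 r2) (Inter r1 r2) \<and> sub (Inter r1 r2) (Plus r1 r2))
         \<longleftrightarrow> sub (Plus r1 r2) r1"
proof -
  obtain xs ys where h: "wfl xs" "eqv r1 (lst xs)" "wfl ys" "eqv r2 (lst ys)"
    using nf assms by metis
  have e: "eqv (Plus r1 r2) (lst (merge xs ys))"
    using plus_eqv[OF h(2) h(4)] assms rec_lst h plus_lst eqv_trans by metis
  have A: "sub (Plus r1 r2) r2"
  proof -
    have "sub (lst (merge xs ys)) (lst ys)" using lst_sub merge_set wfl_merge h by metis
    then show ?thesis using e h(4) eqv_def sub.trans by metis
  qed
  have B: "sub (Inter r1 r2) (Plus r1 r2)"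
  proof -
    have "sub (Inter r1 r2) (Inter (lst xs) (lst ys))" using h inter_mono eqv_def by metis
    moreover have "sub (lst (xs @ ys)) (lst (merge xs ys))"
      using lst_sub merge_set[of ys xs] wfl_app h by (metis set_append)
    ultimately show ?thesis using lst_app h e eqv_def sub.trans by metis
  qed
  have w: "wf r1" "wf r2" using assms rec_wf by auto
  show ?thesis
  proof
    assume "sub (Plus r1 r2) (Inter r1 r2) \<and> sub (Inter r1 r2) (Plus r1 r2)"
    then show "sub (Plus r1 r2) r1" using w by (meson sub.trans sub.inter_l)
  next
    assume "sub (Plus r1 r2) r1"
    then show "sub (Plus r1 r2) (Inter r1 r2) \<and> sub (Inter r1 r2) (Plus r1 r2)"
      using A B by (auto intro: sub.inter_glb)
  qed
qed

end
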